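(* Suppose that $\mathcal G$ is a space group and $\mathcal R\subset\mathcal G$ has Property 2. Then $\ker(\|\cdot\|_{\mathcal R})=U_{\mathrm{trans}}$.
   Context: Euclidean group: $\mathrm E(n)$ consists of pairs $(A|b)$, $A\in\mathrm O(n)$, $b\in\mathbb R^n$, acting by $(A|b)\cdot x=Ax+b$, product $(A_1|b_1)(A_2|b_2)=(A_1A_2|b_1+A_1b_2)$; $\mathrm{rot}(A|b)=A$. A space group in $\mathrm E(n)$ is a discrete subgroup (all orbits discrete) containing $n$ translations $(I|b)$ with linearly independent $b$'s. Standing setting: $d=d_1+d_2$; $\mathcal S<\mathrm E(d_2)$ is a space group with translation subgroup $\mathcal T_{\mathcal S}$; $A\oplus(B|b)=(\mathrm{diag}(A,B)|(0,b))$; $\mathcal G$ is a discrete subgroup of $\mathrm E(d)$ contained in $\{A\oplus s:A\in\mathrm O(d_1),s\in\mathcal S\}$ projecting onto $\mathcal S$; $\mathcal T\subset\mathcal G$ maps bijectively onto $\mathcal T_{\mathcal S}$. There is $m_0\in\mathbb N$ such that $\mathcal T^N=\{t^N:t\in\mathcal T\}$ is a normal subgroup iff $N\in\mathcal M=m_0\mathbb N$, then isomorphic to $\mathbb Z^{d_2}$ of finite index; $\mathcal C_N$ is a fixed set of representatives of $\mathcal G/\mathcal T^N$. $U_{\mathrm{per}}$: maps $u:\mathcal G\to\mathbb R^d$ that are $\mathcal T^N$-periodic for some $N\in\mathcal M$. $x_0\in\mathbb R^d$ with $g\mapsto g\cdot x_0$ injective; $d_{\mathrm{aff}}=\dim\mathrm{aff}(\mathcal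 G\cdot x_0)$; assumed $\mathcal G\cdot x_0\subset\{0_{d-d_{\mathrm{aff}}}\}\times\mathbb R^{d_{\mathrm{aff}}}$ and $\mathcal G$ acts trivially on $\mathbb R^{d-d_{\mathrm{aff}}}\times\{0\}$. $U_{\mathrm{iso}}(\mathcal R)$: maps $v:\mathcal R\to\mathbb R^d$ with $a\in\mathbb R^d$, $S\in\mathrm{Skew}(d)$ such that $\mathrm{rot}(g)v(g)=a+S(g\cdot x_0-x_0)$ on $\mathcal R$. For finite $\mathcal R$ and $\mathcal T^N$-periodic $u$: $\|u\|_{\mathcal R}=\big(\frac1{|\mathcal C_N|}\sum_{g\in\mathcal C_N}\mathrm{dist}(u(g\,\cdot)|_{\mathcal R},U_{\mathrm{iso}}(\mathcal R))^2\big)^{1/2}$. $U_{\mathrm{trans}}$ is the set of maps $u:\mathcal G\to\mathbb R^d$ such that there is $a\in\mathbb R^d$ with $\mathrm{rot}(g)u(g)=a$ for all $g\in\mathcal G$. Property 1: $\mathcal R$ finite, $\mathrm{id}\in\mathcal R$, $\mathrm{aff}(\mathcal R\cdot x_0)=\mathrm{aff}(\mathcal G\cdot x_0)$. Property 2: $\mathcal R$ finite, and there are $\mathcal R',\mathcal R''$ with $\mathrm{id}\in\mathcal R'$, $\mathcal R'$ generating $\mathcal G$, $\mathcal R''$ with Property 1, and $\{gh:g\in\mathcal R',h\in\mathcal R''\}\subset\mathcal R$. *)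

theory Defs
  imports "HOL-Analysis.Analysis"
begin

text \<open>Elements of the Euclidean group E(d): pairs (A,b), acting by x |-> A x + b.\<close>

type_synonym 'd eucl = "(real^'d^'d) \<times> (real^'d)"

definition Eucl :: "'d::finite eucl set" where
  "Eucl = {(A, b). orthogonal_matrix A}"

definition emul :: "'d::finite eucl \<Rightarrow> 'd eucl \<Rightarrow> 'd eucl" where
  "emul g h = (fst g ** fst h, snd g + fst g *v snd h)"

definition eid :: "'d::finite eucl" where
  "eid = (mat 1, 0)"

definition einv :: "'d::finite eucl \<Rightarrow> 'd eucl" where
  "einv g = (transpose (fst g), - (transpose (fst g) *v snd g))"

definition rot :: "'d::finite eucl \<Rightarrow> real^'d^'d" where
  "rot g = fst g"

definition act :: "'d::finite eucl \<Rightarrow> real^'d \<Rightarrow> real^'d" where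
  "act g x = fst g *v x + snd g"

fun epow :: "'d::finite eucl \<Rightarrow> nat \<Rightarrow> 'd eucl" where
  "epow g 0 = eid"
| "epow g (Suc n) = emul g (epow g n)"

definition esubgroup :: "'d::finite eucl set \<Rightarrow> bool" where
  "esubgroup H \<longleftrightarrow> H \<subseteq> Eucl \<and> eid \<in> H \<and>
     (\<forall>g\<in>H. \<forall>h\<in>H. emul g h \<in> H) \<and> (\<forall>g\<in>H. einv g \<in> H)"

definition enormal :: "'d::finite eucl set \<Rightarrow> 'd eucl set \<Rightarrow> bool" where
  "enormal H G \<longleftrightarrow> esubgroup H \<and> H \<subseteq> G \<and>
     (\<forall>g\<in>G. \<forall>h\<in>H. emul (emul g h) (einv g) \<in> H)"

definition egen :: "'d::finite eucl set \<Rightarrow> 'd eucl set" where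
  "egen R = \<Inter> {H. esubgroup H \<and> R \<subseteq> H}"

definition discrete_set :: "(real^'d) set \<Rightarrow> bool" where
  "discrete_set S \<longleftrightarrow> (\<forall>y\<in>S. \<exists>e>0. \<forall>z\<in>S. dist z y < e \<longrightarrow> z = y)"

definition space_group :: "'d::finite eucl set \<Rightarrow> bool" where
  "space_group G \<longleftrightarrow> esubgroup G \<and> (\<forall>x. discrete_set ((\<lambda>g. act g x) ` G)) \<and>
     (\<exists>B. independent B \<and> card B = CARD('d) \<and> (\<forall>b\<in>B. (mat 1, b) \<in> G))"

definition transl :: "'d::finite eucl set \<Rightarrow> 'd eucl set" where
  "transl G = {g \<in> G. fst g = mat 1}"

definition transl_pow :: "'d::finite eucl set \<Rightarrow> nat \<Rightarrow> 'd eucl set" where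
  "transl_pow G N = (\<lambda>t. epow t N) ` transl G"

definition admissible :: "'d::finite eucl set \<Rightarrow> nat \<Rightarrow> bool" where
  "admissible G N \<longleftrightarrow> N \<ge> 1 \<and> enormal (transl_pow G N) G"

definition periodic :: "'d::finite eucl set \<Rightarrow> nat \<Rightarrow> ('d eucl \<Rightarrow> real^'d) \<Rightarrow> bool" where
  "periodic G N u \<longleftrightarrow> (\<forall>g\<in>G. \<forall>t\<in>transl_pow G N. u (emul g t) = u g)"

definition Uper :: "'d::finite eucl set \<Rightarrow> ('d eucl \<Rightarrow> real^'d) set" where
  "Uper G = {u. \<exists>N. admissible G N \<and> periodic G N u}"

definition reps :: "'d::finite eucl set \<Rightarrow> 'd eucl set \<Rightarrow> 'd eucl set \<Rightarrow> bool" where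
  "reps G H C \<longleftrightarrow> C \<subseteq> G \<and> (\<forall>g\<in>G. \<exists>!c. c \<in> C \<and> emul (einv c) g \<in> H)"

definition skew :: "real^'d^'d \<Rightarrow> bool" where
  "skew S \<longleftrightarrow> transpose S = - S"

definition Uiso :: "real^'d::finite \<Rightarrow> 'd eucl set \<Rightarrow> ('d eucl \<Rightarrow> real^'d) set" where
  "Uiso x0 R = {v. \<exists>a S. skew S \<and>
      (\<forall>g\<in>R. rot g *v v g = a + S *v (act g x0 - x0))}"

definition isodist :: "real^'d::finite \<Rightarrow> 'd eucl set \<Rightarrow> ('d eucl \<Rightarrow> real^'d) \<Rightarrow> real" where
  "isodist x0 R w = Inf {sqrt (\<Sum>h\<in>R. (norm (w h - v h))\<^sup>2) | v. v \<in> Uiso x0 R}"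

definition Rnorm :: "real^'d::finite \<Rightarrow> 'd eucl set \<Rightarrow> 'd eucl set \<Rightarrow> ('d eucl \<Rightarrow> real^'d) \<Rightarrow> real" where
  "Rnorm x0 C R u = sqrt ((1 / real (card C)) *
      (\<Sum>g\<in>C. (isodist x0 R (\<lambda>h. u (emul g h)))\<^sup>2))"

definition Utrans :: "'d::finite eucl set \<Rightarrow> ('d eucl \<Rightarrow> real^'d) set" where
  "Utrans G = {u. \<exists>a. \<forall>g\<in>G. rot g *v u g = a}"

definition property1 :: "real^'d::finite \<Rightarrow> 'd eucl set \<Rightarrow> 'd eucl set \<Rightarrow> bool" where
  "property1 x0 G R \<longleftrightarrow> finite R \<and> eid \<in> R \<and>
     affine hull ((\<lambda>g. act g x0) ` R) = affine hull ((\<lambda>g. act g x0) ` G)"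

definition property2 :: "real^'d::finite \<Rightarrow> 'd eucl set \<Rightarrow> 'd eucl set \<Rightarrow> bool" where
  "property2 x0 G R \<longleftrightarrow> finite R \<and>
     (\<exists>R' R''. R' \<subseteq> G \<and> R'' \<subseteq> G \<and> eid \<in> R' \<and> egen R' = G \<and> property1 x0 G R'' \<and>
        {emul g h | g h. g \<in> R' \<and> h \<in> R''} \<subseteq> R)"

end

theory Submission
  imports Defs
begin


lemma orth_norm: "orthogonal_matrix (A::real^'n^'n) \<Longrightarrow> norm (A *v x) = norm x"
  by (metis matrix_of_matrix_vector_mul matrix_vector_mul_linear orthogonal_transformation_matrix orthogonal_transformation_norm)

lemma orthTA: "orthogonal_matrix (A::real^'n^'n) \<Longrightarrow> transpose A ** A = mat 1"
  by (simp add: orthogonal_matrix_def)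
lemma orthAT: "orthogonal_matrix (A::real^'n^'n) \<Longrightarrow> A ** transpose A = mat 1"
  by (simp add: orthogonal_matrix_def)

lemma orthTAv: "orthogonal_matrix (A::real^'n^'n) \<Longrightarrow> transpose A *v (A *v x) = x"
  by (simp add: matrix_vector_mul_assoc orthTA del: transpose_matrix_vector)
lemma orthATv: "orthogonal_matrix (A::real^'n^'n) \<Longrightarrow> A *v (transpose A *v x) = x"
  by (simp add: matrix_vector_mul_assoc orthAT del: transpose_matrix_vector)

lemma mv_neg[simp]: "(A::real^'n^'m) *v (- x) = - (A *v x)"
  using linear_neg[OF matrix_vector_mul_linear] by blast

lemma emul_assoc: "emul (emul a b) c = emul a (emul b c)"
  by (simp add: emul_def matrix_mul_assoc matrix_vector_mul_assoc matrix_vector_right_distrib add.assoc)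

lemma emul_eid_left[simp]: "emul eid g = g" and emul_eid_right[simp]: "emul g eid = g"
  by (simp_all add: emul_def eid_def)

lemma einv_left: "g \<in> Eucl \<Longrightarrow> emul (einv g) g = eid"
  by (cases g) (simp add: emul_def einv_def eid_def Eucl_def orthTA matrix_vector_mul_assoc del: transpose_matrix_vector)
lemma einv_right: "g \<in> Eucl \<Longrightarrow> emul g (einv g) = eid"
  by (cases g) (simp add: emul_def einv_def eid_def Eucl_def orthAT matrix_vector_mul_assoc del: transpose_matrix_vector)
lemma einv_einv: "g \<in> Eucl \<Longrightarrow> einv (einv g) = g"
  by (cases g) (simp add: einv_def Eucl_def orthAT matrix_vector_mul_assoc del: transpose_matrix_vector)
lemma einv_emul: "a \<in> Eucl \<Longrightarrow> einv (emul a b) = emul (einv b) (einv a)"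
  by (cases a, cases b) (simp add: matrix_mul_assoc[symmetric] emul_def einv_def Eucl_def matrix_transpose_mul matrix_vector_mul_assoc matrix_vector_right_distrib orthTA del: transpose_matrix_vector)

lemma rot_emul: "rot (emul g h) = rot g ** rot h" by (simp add: rot_def emul_def)
lemma act_emul: "act (emul g h) x = act g (act h x)"
  by (simp add: act_def emul_def matrix_vector_mul_assoc matrix_vector_right_distrib add.assoc)
lemma rot_eid[simp]: "rot eid = mat 1" by (simp add: rot_def eid_def)
lemma act_eid[simp]: "act eid x = x" by (simp add: act_def eid_def)

lemma epow_transl: "epow (mat 1, b) N = (mat 1, of_nat N *\<^sub>R b)"
  by (induction N) (simp_all add: eid_def emul_def algebra_simps)



lemma attain:
  fixes L :: "'e::euclidean_space \<Rightarrow> 'a \<Rightarrow> 'b::euclidean_space"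
  assumes fin: "finite R" and lin: "\<And>h. linear (\<lambda>p. L p h)"
    and inf0: "Inf {sqrt (\<Sum>h\<in>R. (norm (w h - L p h))\<^sup>2) | p. True} = 0"
  shows "\<exists>p. \<forall>h\<in>R. w h = L p h"
proof -
  define D where "D p = L2_set (\<lambda>h. norm (w h - L p h)) R" for p
  define Nn where "Nn p = L2_set (\<lambda>h. norm (L p h)) R" for p
  have Dset: "{sqrt (\<Sum>h\<in>R. (norm (w h - L p h))\<^sup>2) | p. True} = range D"
    by (auto simp: D_def L2_set_def)
  define K where "K = {p. \<forall>h\<in>R. L p h = 0}"
  have subK: "subspace K"
    unfolding K_def subspace_def by (auto simp: linear_add[OF lin] linear_0[OF lin] linear_scale[OF lin])
  define P where "P = {q. \<forall>k\<in>K. q \<bullet> k = 0}"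
  have subP: "subspace P"
    unfolding P_def subspace_def by (auto simp: inner_add_left)
  have clP: "closed P" by (rule closed_subspace[OF subP])
  have decomp: "\<exists>q\<in>P. D q = D p" for p
  proof -
    obtain y z where y: "y \<in> span K" and z: "\<And>v. v \<in> span K \<Longrightarrow> orthogonal z v" and pyz: "p = y + z"
      using orthogonal_subspace_decomp_exists[of K p] by blast
    have yK: "y \<in> K" using y span_eq_iff subK by blast
    have "z \<in> P" using z span_base unfolding P_def orthogonal_def by blast
    moreover have "L z h = L p h" if "h \<in> R" for h
      using yK that pyz linear_add[OF lin[of h], of y z] by (auto simp: K_def)
    ultimately show ?thesis unfolding D_def by (intro bexI[of _ z] L2_set_cong) auto
  qed
  have contL: "continuous_on UNIV (\<lambda>p. L p h)" for h
    using lin[of h] linear_continuous_on linear_conv_bounded_linear by blast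
  have contD: "continuous_on UNIV D"
    unfolding D_def L2_set_def by (intro continuous_intros contL)
  have contN: "continuous_on UNIV Nn"
    unfolding Nn_def L2_set_def by (intro continuous_intros contL)
  have Nscale: "Nn (c *\<^sub>R q) = \<bar>c\<bar> * Nn q" for c q
    unfolding Nn_def using L2_set_right_distrib[of "\<bar>c\<bar>" "\<lambda>h. norm (L q h)" R]
    by (simp add: linear_scale[OF lin])
  have Ntri: "Nn q \<le> D q + D 0" for q
  proof -
    have "Nn q \<le> L2_set (\<lambda>h. norm (L q h - w h) + norm (w h)) R"
      unfolding Nn_def by (rule L2_set_mono) (auto intro: order_trans[OF _ norm_triangle_ineq] simp: )
    also have "\<dots> \<le> L2_set (\<lambda>h. norm (L q h - w h)) R + L2_set (\<lambda>h. norm (w h)) R"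
      by (rule L2_set_triangle_ineq)
    also have "\<dots> = D q + D 0"
      unfolding D_def by (simp add: linear_0[OF lin] norm_minus_commute)
    finally show ?thesis .
  qed
  have N0: "q = 0" if "q \<in> P" "Nn q = 0" for q
  proof -
    have "q \<in> K" using that fin unfolding Nn_def K_def by (simp add: L2_set_eq_0_iff)
    then have "q \<bullet> q = 0" using that unfolding P_def by blast
    then show ?thesis by simp
  qed
  obtain qs where qs: "\<forall>p. D qs \<le> D p"
  proof (cases "P \<inter> sphere 0 1 = {}")
    case True
    have "q = 0" if "q \<in> P" for q
    proof (rule ccontr)
      assume "q \<noteq> 0"
      then have "(1 / norm q) *\<^sub>R q \<in> P \<inter> sphere 0 1"
        using that subP by (auto simp: subspace_scale)
      then show False using True by blast
    qed
    then have "D 0 \<le> D p" for p using decomp[of p] by force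
    then show ?thesis using that by blast
  next
    case False
    have "compact (P \<inter> sphere 0 1)" using clP by (metis Int_commute compact_Int_closed compact_sphere)
    then obtain q0 where q0: "q0 \<in> P \<inter> sphere 0 1" and q0m: "\<forall>y\<in>P \<inter> sphere 0 1. Nn q0 \<le> Nn y"
      using continuous_attains_inf[of "P \<inter> sphere 0 1" Nn] False contN continuous_on_subset by blast
    define c where "c = Nn q0"
    have cpos: "c > 0"
    proof -
      have "c \<ge> 0" unfolding c_def Nn_def by simp
      moreover have "c \<noteq> 0" using N0[of q0] q0 unfolding c_def by auto
      ultimately show ?thesis by simp
    qed
    have Nlow: "c * norm q \<le> Nn q" if "q \<in> P" for q
    proof (cases "q = 0")
      case True then show ?thesis by (simp add: Nn_def)
    next
      case False
      have "(1 / norm q) *\<^sub>R q \<in> P \<inter> sphere 0 1"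
        using that subP False by (auto simp: subspace_scale)
      then have "c \<le> Nn ((1 / norm q) *\<^sub>R q)" using q0m c_def by blast
      also have "\<dots> = Nn q / norm q" by (simp add: Nscale)
      finally show ?thesis using False by (simp add: field_simps)
    qed
    define rho where "rho = 2 * D 0 / c"
    have rho0: "0 \<le> rho" unfolding rho_def D_def using cpos by simp
    have "compact (P \<inter> cball 0 rho)" using clP by (metis Int_commute compact_Int_closed compact_cball)
    moreover have "P \<inter> cball 0 rho \<noteq> {}"
      using rho0 subP subspace_0 by fastforce
    ultimately obtain q1 where q1: "q1 \<in> P \<inter> cball 0 rho" and q1m: "\<forall>y\<in>P \<inter> cball 0 rho. D q1 \<le> D y"
      using continuous_attains_inf[of "P \<inter> cball 0 rho" D] contD continuous_on_subset by blast
    have "D q1 \<le> D p" for p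
    proof -
      obtain q where q: "q \<in> P" "D q = D p" using decomp by blast
      show ?thesis
      proof (cases "norm q \<le> rho")
        case True then have "q \<in> P \<inter> cball 0 rho" using q by (simp add: mem_cball_0)
        then show ?thesis using q q1m by metis
      next
        case False
        have "0 \<in> P \<inter> cball 0 rho" using subP subspace_0 rho0 by auto
        then have "D q1 \<le> D 0" using q1m by metis
        moreover have "c * norm q > 2 * D 0"
          using False cpos unfolding rho_def by (simp add: field_simps)
        ultimately show ?thesis using Nlow[OF q(1)] Ntri[of q] q(2) by linarith
      qed
    qed
    then show ?thesis using that by blast
  qed
  have "D qs \<le> Inf (range D)"
    by (rule cInf_greatest) (use qs in auto)
  then have "D qs \<le> 0" using inf0 Dset by simp
  then have "D qs = 0" by (simp add: D_def antisym)
  then have "\<forall>h\<in>R. w h = L qs h" using fin by (simp add: D_def L2_set_eq_0_iff)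
  then show ?thesis by blast
qed



lemma sg_mul: "esubgroup G \<Longrightarrow> g \<in> G \<Longrightarrow> h \<in> G \<Longrightarrow> emul g h \<in> G"
  by (simp add: esubgroup_def)
lemma sg_inv: "esubgroup G \<Longrightarrow> g \<in> G \<Longrightarrow> einv g \<in> G"
  by (simp add: esubgroup_def)
lemma sg_eid: "esubgroup G \<Longrightarrow> eid \<in> G"
  by (simp add: esubgroup_def)
lemma sg_Eucl: "esubgroup G \<Longrightarrow> g \<in> G \<Longrightarrow> g \<in> Eucl"
  by (auto simp add: esubgroup_def)

lemma tr_mul: "emul (mat 1, a) (mat 1, b) = (mat 1, a + b)" by (simp add: emul_def)
lemma tr_inv: "einv (mat 1, a) = (mat 1, - a)" by (simp add: einv_def)

definition Lat :: "'d::finite eucl set \<Rightarrow> (real^'d) set" where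
  "Lat G = {b. (mat 1, b) \<in> G}"

lemma Lat_0: "esubgroup G \<Longrightarrow> 0 \<in> Lat G"
  using sg_eid by (force simp: Lat_def eid_def)
lemma Lat_add: "esubgroup G \<Longrightarrow> a \<in> Lat G \<Longrightarrow> b \<in> Lat G \<Longrightarrow> a + b \<in> Lat G"
  using sg_mul[of G "(mat 1, a)" "(mat 1, b)"] by (simp add: Lat_def tr_mul)
lemma Lat_neg: "esubgroup G \<Longrightarrow> a \<in> Lat G \<Longrightarrow> - a \<in> Lat G"
  using sg_inv[of G "(mat 1, a)"] by (simp add: Lat_def tr_inv)
lemma Lat_diff: "esubgroup G \<Longrightarrow> a \<in> Lat G \<Longrightarrow> b \<in> Lat G \<Longrightarrow> a - b \<in> Lat G"
  using Lat_add Lat_neg by (metis diff_conv_add_uminus)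

lemma Lat_nat: "esubgroup G \<Longrightarrow> a \<in> Lat G \<Longrightarrow> of_nat n *\<^sub>R a \<in> Lat G"
  by (induction n) (auto simp: Lat_0 Lat_add algebra_simps)
lemma Lat_int: assumes "esubgroup G" "a \<in> Lat G" shows "of_int k *\<^sub>R a \<in> Lat G"
proof (cases "k \<ge> 0")
  case True
  then have "of_int k = (of_nat (nat k) :: real)" by simp
  then show ?thesis using Lat_nat assms by metis
next
  case False
  then have "of_int k = - (of_nat (nat (-k)) :: real)" by simp
  then show ?thesis using Lat_nat Lat_neg assms by (metis scaleR_minus_left)
qed
lemma Lat_comb: assumes sg: "esubgroup G" shows "finite S \<Longrightarrow> S \<subseteq> Lat G \<Longrightarrow> (\<Sum>b\<in>S. of_int (k b) *\<^sub>R b) \<in> Lat G"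
  by (induction S rule: finite_induct) (auto simp: Lat_0[OF sg] Lat_add[OF sg] Lat_int[OF sg])

lemma Lat_sep:
  assumes "space_group G"
  shows "\<exists>e>0. \<forall>x\<in>Lat G. \<forall>y\<in>Lat G. dist x y < e \<longrightarrow> x = y"
proof -
  have sg: "esubgroup G" using assms by (simp add: space_group_def)
  have ds: "discrete_set ((\<lambda>g. act g 0) ` G)" using assms by (simp add: space_group_def)
  have "0 \<in> (\<lambda>g. act g 0) ` G" using sg_eid[OF sg] by force
  then obtain e where e: "e > 0" "\<forall>z\<in>(\<lambda>g. act g 0) ` G. dist z 0 < e \<longrightarrow> z = 0"
    using ds unfolding discrete_set_def by blast
  have "x = y" if "x \<in> Lat G" "y \<in> Lat G" "dist x y < e" for x y
  proof -
    have "x - y \<in> Lat G" using Lat_diff sg that by blast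
    then have "x - y \<in> (\<lambda>g. act g 0) ` G"
      unfolding Lat_def by (force simp: act_def)
    moreover have "dist (x - y) 0 < e" using that by (simp add: dist_norm)
    ultimately show ?thesis using e by auto
  qed
  then show ?thesis using e by blast
qed

lemma Lat_fin: "space_group G \<Longrightarrow> finite (Lat G \<inter> cball 0 r)"
proof -
  assume a: "space_group G"
  obtain e where "e > 0" "\<forall>x\<in>Lat G. \<forall>y\<in>Lat G. dist x y < e \<longrightarrow> x = y" using Lat_sep[OF a] by blast
  then have "uniform_discrete (Lat G \<inter> cball 0 r)" unfolding uniform_discrete_def by blast
  then show ?thesis using uniform_discrete_finite_iff by blast
qed

lemma rot_Lat: "esubgroup G \<Longrightarrow> g \<in> G \<Longrightarrow> b \<in> Lat G \<Longrightarrow> rot g *v b \<in> Lat G"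
proof -
  assume sg: "esubgroup G" and g: "g \<in> G" and b: "b \<in> Lat G"
  have "emul (emul g (mat 1, b)) (einv g) \<in> G"
    using sg g b by (simp add: Lat_def sg_mul sg_inv)
  moreover have "emul (emul g (mat 1, b)) (einv g) = (mat 1, rot g *v b)"
    using sg_Eucl[OF sg g]
    by (cases g) (simp add: emul_def einv_def rot_def Eucl_def orthAT matrix_vector_mul_assoc del: transpose_matrix_vector)
  ultimately show ?thesis by (simp add: Lat_def)
qed



lemma basis_span:
  fixes B :: "(real^'d::finite) set"
  assumes "independent B" "card B = CARD('d)"
  shows "span B = UNIV" "finite B"
proof -
  have "0 < CARD('d)" by simp
  then show "finite B" using assms(2) card_ge_0_finite by metis
  have "dim (UNIV :: (real^'d) set) \<le> card B" using assms by simp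
  then show "span B = UNIV" using card_ge_dim_independent[of B UNIV] assms(1) by auto
qed

lemma sg_basis:
  assumes "space_group G"
  obtains B where "finite B" "span B = UNIV" "B \<subseteq> Lat G"
  using assms basis_span unfolding space_group_def Lat_def by blast

lemma rotG_fin:
  fixes G :: "'d::finite eucl set"
  assumes sgr: "space_group G"
  shows "finite (rot ` G)"
proof -
  have sg: "esubgroup G" using sgr by (simp add: space_group_def)
  obtain B where B: "finite B" "span B = UNIV" "B \<subseteq> Lat G" using sg_basis[OF sgr] by blast
  define f where "f A = restrict (\<lambda>b. A *v b) B" for A :: "real^'d^'d"
  have "f ` rot ` G \<subseteq> PiE B (\<lambda>b. Lat G \<inter> cball 0 (norm b))"
  proof
    fix y assume "y \<in> f ` rot ` G"
    then obtain g where g: "g \<in> G" "y = f (rot g)" by blast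
    have "orthogonal_matrix (rot g)" using sg_Eucl[OF sg g(1)] by (cases g) (simp add: Eucl_def rot_def)
    then show "y \<in> PiE B (\<lambda>b. Lat G \<inter> cball 0 (norm b))"
      using g rot_Lat[OF sg g(1)] B(3) orth_norm[of "rot g"] by (auto simp: f_def mem_cball_0)
  qed
  moreover have "finite (PiE B (\<lambda>b. Lat G \<inter> cball 0 (norm b)))"
    using B(1) Lat_fin[OF sgr] by (simp add: finite_PiE)
  ultimately have "finite (f ` rot ` G)" using finite_subset by blast
  moreover have "inj_on f (rot ` G)"
  proof
    fix A1 A2 assume "A1 \<in> rot ` G" "A2 \<in> rot ` G" "f A1 = f A2"
    then have eqB: "\<And>b. b \<in> B \<Longrightarrow> A1 *v b = A2 *v b" unfolding f_def by (metis restrict_apply')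
    have "A1 *v x = A2 *v x" for x
      by (rule real_vector.linear_eq_on[where B=B]) (use B eqB in \<open>auto simp: linear_def[symmetric]\<close>)
    then show "A1 = A2" by (simp add: matrix_eq)
  qed
  ultimately show ?thesis using finite_imageD by blast
qed



lemma floor_rem:
  assumes "(N::real) > 0"
  shows "\<bar>c - N * of_int \<lfloor>c / N\<rfloor>\<bar> \<le> N"
proof -
  have a: "of_int \<lfloor>c / N\<rfloor> \<le> c / N" and b: "c / N < of_int \<lfloor>c / N\<rfloor> + 1" by linarith+
  have "N * of_int \<lfloor>c / N\<rfloor> \<le> N * (c / N)" using a assms by (intro mult_left_mono) auto
  moreover have "N * (c / N) < N * (of_int \<lfloor>c / N\<rfloor> + 1)" using b assms by (intro mult_strict_left_mono) auto
  moreover have "N * (c / N) = c" using assms by simp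
  ultimately have "N * of_int \<lfloor>c / N\<rfloor> \<le> c" "c < N * of_int \<lfloor>c / N\<rfloor> + N" using assms by (simp_all add: algebra_simps)
  then show ?thesis by linarith
qed

lemma Lat_reduce:
  assumes sg: "esubgroup G" and B: "finite B" "span B = UNIV" "B \<subseteq> Lat G"
    and N: "N \<ge> 1" and l: "l \<in> Lat G"
  shows "\<exists>m\<in>Lat G. l - of_nat N *\<^sub>R m \<in> Lat G \<inter> cball 0 (of_nat N * (\<Sum>b\<in>B. norm b))"
proof -
  have "l \<in> span B" using B by simp
  then obtain c where c: "l = (\<Sum>b\<in>B. c b *\<^sub>R b)"
    using real_vector.span_finite[OF B(1)] by auto
  define m where "m = (\<Sum>b\<in>B. of_int \<lfloor>c b / of_nat N\<rfloor> *\<^sub>R b)"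
  have mL: "m \<in> Lat G" unfolding m_def using Lat_comb[OF sg B(1) B(3)] .
  have req: "l - of_nat N *\<^sub>R m = (\<Sum>b\<in>B. (c b - of_nat N * of_int \<lfloor>c b / of_nat N\<rfloor>) *\<^sub>R b)"
    unfolding c m_def by (simp add: scaleR_sum_right sum_subtractf[symmetric] scaleR_left_diff_distrib)
  have Npos: "(of_nat N :: real) > 0" using N by simp
  have "norm (l - of_nat N *\<^sub>R m) \<le> (\<Sum>b\<in>B. norm ((c b - of_nat N * of_int \<lfloor>c b / of_nat N\<rfloor>) *\<^sub>R b))"
    unfolding req by (rule norm_sum)
  also have "\<dots> \<le> (\<Sum>b\<in>B. of_nat N * norm b)"
    by (rule sum_mono) (simp add: floor_rem[OF Npos] mult_right_mono)
  also have "\<dots> = of_nat N * (\<Sum>b\<in>B. norm b)" by (simp add: sum_distrib_left)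
  finally have "norm (l - of_nat N *\<^sub>R m) \<le> of_nat N * (\<Sum>b\<in>B. norm b)" .
  moreover have "l - of_nat N *\<^sub>R m \<in> Lat G"
    using Lat_diff[OF sg l Lat_nat[OF sg mL]] .
  ultimately show ?thesis using mL by (auto simp: mem_cball_0)
qed

lemma transl_pow_mem: "m \<in> Lat G \<Longrightarrow> (mat 1, of_nat N *\<^sub>R m) \<in> transl_pow G N"
  unfolding transl_pow_def transl_def Lat_def
  by (rule image_eqI[of _ _ "(mat 1, m)"]) (simp_all add: epow_transl)

lemma C_finite:
  fixes G :: "'d::finite eucl set"
  assumes sgr: "space_group G" and adm: "admissible G N" and reps: "reps G (transl_pow G N) C"
  shows "finite C"
proof -
  have sg: "esubgroup G" using sgr by (simp add: space_group_def)
  define H where "H = transl_pow G N"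
  have sgH: "esubgroup H" and HG: "H \<subseteq> G" using adm unfolding admissible_def enormal_def H_def by auto
  have N1: "N \<ge> 1" using adm by (simp add: admissible_def)
  obtain B where B: "finite B" "span B = UNIV" "B \<subseteq> Lat G" using sg_basis[OF sgr] by blast
  define rho where "rho = of_nat N * (\<Sum>b\<in>B. norm b)"
  define rep where "rep A = (SOME g. g \<in> G \<and> rot g = A)" for A
  have rep: "rep A \<in> G \<and> rot (rep A) = A" if "A \<in> rot ` G" for A
    unfolding rep_def using that by (metis (mono_tags, lifting) imageE someI)
  define F where "F = (\<lambda>(A, r). emul (rep A) (mat 1, r)) ` (rot ` G \<times> (Lat G \<inter> cball 0 rho))"
  have finF: "finite F" unfolding F_def using rotG_fin[OF sgr] Lat_fin[OF sgr] by simp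
  have cover: "\<exists>c'. c' \<in> F \<and> c' \<in> G \<and> emul (einv c') g \<in> H" if g: "g \<in> G" for g
  proof -
    define gA where "gA = rep (rot g)"
    have gA: "gA \<in> G" "rot gA = rot g" using rep[of "rot g"] g unfolding gA_def by auto
    define y where "y = emul (einv gA) g"
    have yG: "y \<in> G" unfolding y_def using sg gA g by (simp add: sg_mul sg_inv)
    have "orthogonal_matrix (rot g)" using sg_Eucl[OF sg g] by (cases g) (simp add: Eucl_def rot_def)
    then have fy: "fst y = mat 1" using gA(2) unfolding y_def
      by (simp add: emul_def einv_def rot_def orthTA)
    define l where "l = snd y"
    have yl: "y = (mat 1, l)" using fy unfolding l_def by (cases y) simp
    have lL: "l \<in> Lat G" using yG yl by (simp add: Lat_def)
    obtain m where m: "m \<in> Lat G" "l - of_nat N *\<^sub>R m \<in> Lat G \<inter> cball 0 rho"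
      using Lat_reduce[OF sg B N1 lL] unfolding rho_def by blast
    define r where "r = l - of_nat N *\<^sub>R m"
    define c' where "c' = emul gA (mat 1, r)"
    have "c' \<in> F" unfolding F_def c'_def gA_def r_def using m g by force
    moreover have "c' \<in> G" unfolding c'_def using m sg gA(1) by (simp add: sg_mul r_def Lat_def)
    moreover have "emul (einv c') g = (mat 1, of_nat N *\<^sub>R m)"
    proof -
      have "emul (einv c') g = emul (einv (mat 1, r)) (emul (einv gA) g)"
        unfolding c'_def using sg_Eucl[OF sg gA(1)] by (simp add: einv_emul emul_assoc)
      also have "\<dots> = (mat 1, of_nat N *\<^sub>R m)" using yl unfolding y_def[symmetric] r_def
        by (simp add: tr_inv tr_mul)
      finally show ?thesis .
    qed
    ultimately show ?thesis using transl_pow_mem[OF m(1)] unfolding H_def by metis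
  qed
  define phi where "phi c = (SOME c'. c' \<in> F \<and> c' \<in> G \<and> emul (einv c') c \<in> H)" for c
  have CG: "C \<subseteq> G" using reps by (simp add: reps_def)
  have phi: "phi c \<in> F \<and> phi c \<in> G \<and> emul (einv (phi c)) c \<in> H" if "c \<in> C" for c
    unfolding phi_def using cover[of c] that CG by (metis (mono_tags, lifting) someI_ex subsetD)
  have uniq: "\<forall>g\<in>G. \<exists>!c. c \<in> C \<and> emul (einv c) g \<in> H" using reps by (simp add: reps_def H_def)
  have "inj_on phi C"
  proof
    fix c1 c2 assume c: "c1 \<in> C" "c2 \<in> C" "phi c1 = phi c2"
    define c' where "c' = phi c1"
    have c'G: "c' \<in> G" using phi c unfolding c'_def by blast
    have x1: "emul (einv c') c1 \<in> H" and x2: "emul (einv c') c2 \<in> H"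
      using phi[of c1] phi[of c2] c unfolding c'_def by auto
    have "emul (einv (emul (einv c') c2)) (emul (einv c') c1) \<in> H"
      using sgH x1 x2 by (simp add: sg_mul sg_inv)
    moreover have "emul (einv (emul (einv c') c2)) (emul (einv c') c1) = emul (einv c2) c1"
    proof -
      have Ec': "c' \<in> Eucl" "einv c' \<in> Eucl" using sg c'G by (simp_all add: sg_Eucl sg_inv)
      have "emul (einv (emul (einv c') c2)) (emul (einv c') c1) = emul (emul (einv c2) c') (emul (einv c') c1)"
        using Ec' by (simp add: einv_emul einv_einv)
      also have "\<dots> = emul (einv c2) (emul (emul c' (einv c')) c1)" by (simp add: emul_assoc)
      also have "\<dots> = emul (einv c2) c1" using Ec' by (simp add: einv_right)
      finally show ?thesis .
    qed
    ultimately have "emul (einv c2) c1 \<in> H" by simp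
    moreover have "emul (einv c1) c1 \<in> H"
      using c CG sg sgH by (auto simp: einv_left sg_Eucl sg_eid)
    ultimately show "c1 = c2" using uniq c CG by blast
  qed
  moreover have "phi ` C \<subseteq> F" using phi by blast
  ultimately show ?thesis using finF finite_subset finite_imageD by metis
qed



lemma transpose_add': "transpose (A + B) = transpose A + (transpose B :: real^'n^'m)"
  by (simp add: transpose_def vec_eq_iff)
lemma transpose_diff': "transpose (A - B) = transpose A - (transpose B :: real^'n^'m)"
  by (simp add: transpose_def vec_eq_iff)

lemma iso_zero:
  fixes x0 :: "real^'d::finite"
  assumes fin: "finite R" and RE: "R \<subseteq> Eucl" and z: "isodist x0 R w = 0"
  shows "\<exists>a S. \<forall>h\<in>R. rot h *v w h = a + S *v (act h x0 - x0)"
proof -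
  define L where "L p h = transpose (rot h) *v (fst p + (snd p - transpose (snd p)) *v (act h x0 - x0))"
    for p :: "(real^'d) \<times> (real^'d^'d)" and h
  have orth: "orthogonal_matrix (rot h)" if "h \<in> R" for h
    using RE that by (cases h) (auto simp: Eucl_def rot_def)
  have lin: "linear (\<lambda>p. L p h)" for h
    by (rule linearI) (simp_all add: L_def transpose_add' transpose_scalar algebra_simps
        scaleR_matrix_vector_assoc[symmetric])
  have seteq: "{sqrt (\<Sum>h\<in>R. (norm (w h - v h))\<^sup>2) | v. v \<in> Uiso x0 R}
      = {sqrt (\<Sum>h\<in>R. (norm (w h - L p h))\<^sup>2) | p. True}"
  proof (intro set_eqI iffI)
    fix y assume "y \<in> {sqrt (\<Sum>h\<in>R. (norm (w h - v h))\<^sup>2) | v. v \<in> Uiso x0 R}"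
    then obtain v a S where y: "y = sqrt (\<Sum>h\<in>R. (norm (w h - v h))\<^sup>2)" and S: "skew S"
      and v: "\<forall>g\<in>R. rot g *v v g = a + S *v (act g x0 - x0)"
      unfolding Uiso_def by blast
    have SS: "(1/2) *\<^sub>R S - transpose ((1/2) *\<^sub>R S) = S"
      using S by (simp add: skew_def transpose_scalar algebra_simps scaleR_2[symmetric] flip: scaleR_add_right)
    have "v h = L (a, (1/2) *\<^sub>R S) h" if "h \<in> R" for h
      using v that orthTAv[OF orth[OF that], of "v h"] unfolding L_def by (simp add: SS del: transpose_matrix_vector)
    then have "y = sqrt (\<Sum>h\<in>R. (norm (w h - L (a, (1/2) *\<^sub>R S) h))\<^sup>2)"
      unfolding y by (intro arg_cong[where f=sqrt] sum.cong) auto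
    then show "y \<in> {sqrt (\<Sum>h\<in>R. (norm (w h - L p h))\<^sup>2) | p. True}" by blast
  next
    fix y assume "y \<in> {sqrt (\<Sum>h\<in>R. (norm (w h - L p h))\<^sup>2) | p. True}"
    then obtain p where y: "y = sqrt (\<Sum>h\<in>R. (norm (w h - L p h))\<^sup>2)" by blast
    have "skew (snd p - transpose (snd p))" by (simp add: skew_def transpose_diff')
    moreover have "\<forall>g\<in>R. rot g *v L p g = fst p + (snd p - transpose (snd p)) *v (act g x0 - x0)"
      unfolding L_def using orthATv[OF orth] by blast
    ultimately have "(\<lambda>h. L p h) \<in> Uiso x0 R" unfolding Uiso_def by blast
    then show "y \<in> {sqrt (\<Sum>h\<in>R. (norm (w h - v h))\<^sup>2) | v. v \<in> Uiso x0 R}" using y by blast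
  qed
  have "Inf {sqrt (\<Sum>h\<in>R. (norm (w h - L p h))\<^sup>2) | p. True} = 0"
    using z unfolding isodist_def seteq .
  then obtain p where p: "\<forall>h\<in>R. w h = L p h" using attain[of R L w, OF fin lin] by blast
  have "\<forall>h\<in>R. rot h *v w h = fst p + (snd p - transpose (snd p)) *v (act h x0 - x0)"
    using p orthATv[OF orth] unfolding L_def by simp
  then show ?thesis by blast
qed



lemma span_eq_mat:
  fixes A B :: "real^'n^'m"
  assumes "span V = UNIV" "\<And>v. v \<in> V \<Longrightarrow> A *v v = B *v v"
  shows "A = B"
proof -
  have "A *v x = B *v x" for x
    by (rule real_vector.linear_eq_on[where B=V]) (use assms in \<open>auto simp: linear_def[symmetric]\<close>)
  then show ?thesis by (simp add: matrix_eq)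
qed

lemma hull_full:
  fixes G :: "'d::finite eucl set"
  assumes sgr: "space_group G"
  shows "affine hull ((\<lambda>g. act g x0) ` G) = UNIV"
proof -
  have sg: "esubgroup G" using sgr by (simp add: space_group_def)
  obtain B where B: "finite B" "span B = UNIV" "B \<subseteq> Lat G" using sg_basis[OF sgr] by blast
  define S where "S = (\<lambda>g. act g x0) ` G"
  have x0S: "x0 \<in> S" unfolding S_def using sg_eid[OF sg] by force
  have "B - {0} \<subseteq> (\<lambda>x. -x0 + x) ` (S - {x0})"
  proof
    fix b assume b: "b \<in> B - {0}"
    then have "x0 + b \<in> S" using B(3) unfolding S_def Lat_def by (force simp: act_def)
    moreover have "x0 + b \<noteq> x0" using b by simp
    ultimately show "b \<in> (\<lambda>x. -x0 + x) ` (S - {x0})" by (intro image_eqI[of _ _ "x0 + b"]) auto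
  qed
  then have "span (B - {0}) \<subseteq> span ((\<lambda>x. -x0 + x) ` (S - {x0}))" by (rule span_mono)
  then have "span ((\<lambda>x. -x0 + x) ` (S - {x0})) = UNIV" using B(2) by (simp add: span_delete_0 top_le)
  then have "affine hull S = range (\<lambda>x. x0 + x)" using affine_hull_span2[OF x0S] by simp
  also have "\<dots> = UNIV" by (metis add.commute diff_add_cancel surj_def)
  finally show ?thesis unfolding S_def .
qed

lemma V0_span:
  fixes x0 :: "real^'d::finite"
  assumes "affine hull ((\<lambda>g. act g x0) ` R2) = UNIV" "eid \<in> R2"
  shows "span {act h x0 - x0 | h. h \<in> R2} = UNIV"
proof -
  define S where "S = (\<lambda>g. act g x0) ` R2"
  have x0S: "x0 \<in> S" unfolding S_def using assms(2) by force
  define W where "W = (\<lambda>x. -x0 + x) ` (S - {x0})"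
  have WV: "W \<subseteq> {act h x0 - x0 | h. h \<in> R2}" unfolding W_def S_def by auto
  have "v \<in> span W" for v
  proof -
    have "x0 + v \<in> (\<lambda>x. x0 + x) ` span W" using affine_hull_span2[OF x0S] assms(1) unfolding S_def W_def by simp
    then show ?thesis by auto
  qed
  then show ?thesis using span_mono[OF WV] by auto
qed



lemma hard:
  fixes G :: "'d::finite eucl set" and x0 :: "real^'d" and R C :: "'d eucl set" and u
  assumes sgr: "space_group G"
    and reps: "reps G (transl_pow G N) C"
    and adm: "admissible G N"
    and RG: "R \<subseteq> G"
    and p2: "property2 x0 G R"
    and per: "periodic G N u"
    and Rn: "Rnorm x0 C R u = 0"
  shows "u \<in> Utrans G"
proof -
  have sg: "esubgroup G" using sgr by (simp add: space_group_def)
  define H where "H = transl_pow G N"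
  have enH: "enormal H G" using adm by (simp add: admissible_def H_def)
  have sgH: "esubgroup H" and HG: "H \<subseteq> G" using enH by (auto simp: enormal_def)
  have N1: "N \<ge> 1" using adm by (simp add: admissible_def)
  have finR: "finite R" using p2 by (simp add: property2_def)
  have RE: "R \<subseteq> Eucl" using RG sg sg_Eucl by blast
  have finC: "finite C" using C_finite[OF sgr adm reps] .
  have CG: "C \<subseteq> G" using reps by (simp add: reps_def)
  have uniq: "\<forall>g\<in>G. \<exists>!c. c \<in> C \<and> emul (einv c) g \<in> H" using reps by (simp add: reps_def H_def)
  have Cne: "C \<noteq> {}" using uniq sg_eid[OF sg] by blast
  have cardpos: "card C > 0" using finC Cne by (simp add: card_gt_0_iff)
  have orthG: "orthogonal_matrix (rot g)" if "g \<in> G" for g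
    using sg_Eucl[OF sg that] by (cases g) (simp add: Eucl_def rot_def)
  define s where "s = (\<Sum>g\<in>C. (isodist x0 R (\<lambda>h. u (emul g h)))\<^sup>2)"
  have "(1 / real (card C)) * s = 0" using Rn unfolding Rnorm_def s_def by simp
  then have s0: "s = 0" using cardpos by simp
  have iso_c: "isodist x0 R (\<lambda>h. u (emul c h)) = 0" if "c \<in> C" for c
    using s0 finC that unfolding s_def by (simp add: sum_nonneg_eq_0_iff)
  have shift: "\<exists>c\<in>C. \<forall>h\<in>R. u (emul g h) = u (emul c h)" if g: "g \<in> G" for g
  proof -
    obtain c where c: "c \<in> C" "emul (einv c) g \<in> H" using uniq g by blast
    define t where "t = emul (einv c) g"
    have cG: "c \<in> G" using c CG by blast
    have gct: "g = emul c t" unfolding t_def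
      using einv_right[OF sg_Eucl[OF sg cG]] by (simp add: emul_assoc[symmetric])
    have "u (emul g h) = u (emul c h)" if h: "h \<in> R" for h
    proof -
      have hG: "h \<in> G" using h RG by blast
      define t' where "t' = emul (emul (einv h) t) (einv (einv h))"
      have t'H: "t' \<in> H" using enH sg_inv[OF sg hG] c(2) unfolding enormal_def t'_def t_def by blast
      have t'h: "t' = emul (emul (einv h) t) h" unfolding t'_def using einv_einv[OF sg_Eucl[OF sg hG]] by simp
      have "emul h t' = emul t h" unfolding t'h
        using einv_right[OF sg_Eucl[OF sg hG]] by (simp add: emul_assoc[symmetric])
      then have "u (emul g h) = u (emul (emul c h) t')" by (simp add: gct emul_assoc)
      also have "\<dots> = u (emul c h)" using per t'H cG hG sg unfolding periodic_def H_def
        by (simp add: sg_mul)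
      finally show ?thesis .
    qed
    then show ?thesis using c by blast
  qed
  have loc: "\<exists>p. \<forall>h\<in>R. rot h *v u (emul g h) = fst p + snd p *v (act h x0 - x0)" if g: "g \<in> G" for g
  proof -
    obtain c where c: "c \<in> C" "\<forall>h\<in>R. u (emul g h) = u (emul c h)" using shift g by blast
    obtain a S where "\<forall>h\<in>R. rot h *v u (emul c h) = a + S *v (act h x0 - x0)"
      using iso_zero[OF finR RE iso_c[OF c(1)]] by blast
    then show ?thesis using c(2) by (intro exI[of _ "(a, S)"]) simp
  qed
  then have "\<forall>g\<in>G. \<exists>p. \<forall>h\<in>R. rot h *v u (emul g h) = fst p + snd p *v (act h x0 - x0)" by blast
  then have "\<exists>f. \<forall>g\<in>G. \<forall>h\<in>R. rot h *v u (emul g h) = fst (f g) + snd (f g) *v (act h x0 - x0)" by (rule bchoice)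
  then obtain f where f: "\<forall>g\<in>G. \<forall>h\<in>R. rot h *v u (emul g h) = fst (f g) + snd (f g) *v (act h x0 - x0)" by blast
  define aa where "aa g = fst (f g)" for g
  define SS where "SS g = snd (f g)" for g
  have loc': "rot h *v u (emul g h) = aa g + SS g *v (act h x0 - x0)" if "g \<in> G" "h \<in> R" for g h
    using f that unfolding aa_def SS_def by blast
  obtain R1 R2 where R1G: "R1 \<subseteq> G" and R2G: "R2 \<subseteq> G" and eidR1: "eid \<in> R1" and gen: "egen R1 = G"
    and p1: "property1 x0 G R2" and prodR: "{emul g h | g h. g \<in> R1 \<and> h \<in> R2} \<subseteq> R"
    using p2 unfolding property2_def by blast
  have eidR2: "eid \<in> R2" using p1 by (simp add: property1_def)
  have hullR2: "affine hull ((\<lambda>g. act g x0) ` R2) = UNIV" using p1 hull_full[OF sgr] by (simp add: property1_def)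
  have prodR': "emul g h \<in> R" if "g \<in> R1" "h \<in> R2" for g h using prodR that by blast
  have R2R: "h \<in> R" if "h \<in> R2" for h using prodR'[OF eidR1 that] by simp
  have R1R: "r \<in> R" if "r \<in> R1" for r using prodR'[OF that eidR2] by simp
  have eidR: "eid \<in> R" using R1R eidR1 by blast
  have u_aa: "u g = aa g" if "g \<in> G" for g using loc'[OF that eidR] by simp
  have V0: "span {act h x0 - x0 | h. h \<in> R2} = UNIV" using V0_span[OF hullR2 eidR2] .
  have K: "rot r *v (aa (emul g r) + SS (emul g r) *v (act h x0 - x0))
           = aa g + SS g *v ((act r x0 - x0) + rot r *v (act h x0 - x0))"
    if g: "g \<in> G" and r: "r \<in> R1" and h: "h \<in> R2" for g r h
  proof -
    have grG: "emul g r \<in> G" using g r R1G sg by (simp add: sg_mul subsetD)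
    have E1: "rot (emul r h) *v u (emul g (emul r h)) = aa g + SS g *v (act (emul r h) x0 - x0)"
      using loc'[OF g prodR'[OF r h]] .
    have E2: "rot h *v u (emul (emul g r) h) = aa (emul g r) + SS (emul g r) *v (act h x0 - x0)"
      using loc'[OF grG R2R[OF h]] .
    have "rot r *v (rot h *v u (emul (emul g r) h)) = rot (emul r h) *v u (emul g (emul r h))"
      by (simp add: rot_emul matrix_vector_mul_assoc emul_assoc)
    moreover have "act (emul r h) x0 - x0 = (act r x0 - x0) + rot r *v (act h x0 - x0)"
      unfolding act_emul by (simp add: act_def rot_def algebra_simps)
    ultimately show ?thesis using E1 E2 by simp
  qed
  have K1: "rot r *v aa (emul g r) = aa g + SS g *v (act r x0 - x0)"
    if g: "g \<in> G" and r: "r \<in> R1" for g r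
    using K[OF g r eidR2] by simp
  have K2: "rot r ** SS (emul g r) = SS g ** rot r" if g: "g \<in> G" and r: "r \<in> R1" for g r
  proof (rule span_eq_mat[OF V0])
    fix v assume "v \<in> {act h x0 - x0 | h. h \<in> R2}"
    then obtain h where h: "h \<in> R2" "v = act h x0 - x0" by blast
    have "rot r *v aa (emul g r) + rot r *v (SS (emul g r) *v v) = aa g + SS g *v (act r x0 - x0) + SS g *v (rot r *v v)"
      using K[OF g r h(1)] unfolding h(2)[symmetric] by (simp add: algebra_simps)
    then have "rot r *v (SS (emul g r) *v v) = SS g *v (rot r *v v)" using K1[OF g r] by simp
    then show "(rot r ** SS (emul g r)) *v v = (SS g ** rot r) *v v" by (simp add: matrix_vector_mul_assoc)
  qed
  define T where "T g = rot g ** SS g ** transpose (rot g)" for g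
  define beta where "beta g = rot g *v aa g - T g *v act g x0" for g
  have TK: "T (emul g r) = T g" if g: "g \<in> G" and r: "r \<in> R1" for g r
  proof -
    have rG: "r \<in> G" using r R1G by blast
    have "T (emul g r) = rot g ** (rot r ** SS (emul g r)) ** transpose (rot r) ** transpose (rot g)"
      unfolding T_def by (simp add: rot_emul matrix_transpose_mul matrix_mul_assoc)
    also have "\<dots> = rot g ** SS g ** (rot r ** transpose (rot r)) ** transpose (rot g)"
      unfolding K2[OF g r] by (simp add: matrix_mul_assoc)
    also have "\<dots> = T g" unfolding T_def using orthAT[OF orthG[OF rG]] by simp
    finally show ?thesis .
  qed
  have Tv: "rot g *v (SS g *v y) = T g *v (rot g *v y)" if g: "g \<in> G" for g y
    unfolding T_def using orthTAv[OF orthG[OF g], of y]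
    by (simp add: matrix_vector_mul_assoc[symmetric] del: transpose_matrix_vector)
  have betaK: "beta (emul g r) = beta g" if g: "g \<in> G" and r: "r \<in> R1" for g r
  proof -
    have "rot (emul g r) *v aa (emul g r) = rot g *v aa g + rot g *v (SS g *v (act r x0 - x0))"
      by (simp add: rot_emul matrix_vector_mul_assoc[symmetric] K1[OF g r] matrix_vector_right_distrib)
    also have "\<dots> = rot g *v aa g + T g *v (rot g *v act r x0) - T g *v (rot g *v x0)"
      by (simp add: Tv[OF g] matrix_vector_mult_diff_distrib)
    finally have A: "rot (emul g r) *v aa (emul g r) = rot g *v aa g + T g *v (rot g *v act r x0) - T g *v (rot g *v x0)" .
    have B: "act (emul g r) x0 = rot g *v act r x0 + snd g" unfolding act_emul by (simp add: act_def rot_def)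
    show ?thesis unfolding beta_def TK[OF g r] A B
      by (simp add: act_def rot_def matrix_vector_right_distrib algebra_simps)
  qed
  define Hs where "Hs = {k \<in> G. \<forall>x\<in>G. T (emul x k) = T x \<and> beta (emul x k) = beta x}"
  have HsG: "k \<in> G" if "k \<in> Hs" for k using that unfolding Hs_def by blast
  have HsT: "T (emul x k) = T x" if "k \<in> Hs" "x \<in> G" for k x using that unfolding Hs_def by blast
  have HsB: "beta (emul x k) = beta x" if "k \<in> Hs" "x \<in> G" for k x using that unfolding Hs_def by blast
  have HsI: "k \<in> Hs" if "k \<in> G" "\<And>x. x \<in> G \<Longrightarrow> T (emul x k) = T x"
    "\<And>x. x \<in> G \<Longrightarrow> beta (emul x k) = beta x" for k using that unfolding Hs_def by blast
  have sgHs: "esubgroup Hs"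
    unfolding esubgroup_def
  proof (intro conjI ballI)
    show "Hs \<subseteq> Eucl" using HsG sg sg_Eucl by blast
    show "eid \<in> Hs" using sg_eid[OF sg] by (intro HsI) auto
  next
    fix k1 k2 assume k: "k1 \<in> Hs" "k2 \<in> Hs"
    have G1: "emul x k1 \<in> G" if "x \<in> G" for x using that HsG[OF k(1)] sg by (simp add: sg_mul)
    show "emul k1 k2 \<in> Hs"
    proof (rule HsI)
      show "emul k1 k2 \<in> G" using HsG k sg by (simp add: sg_mul)
    next
      fix x assume x: "x \<in> G"
      show "T (emul x (emul k1 k2)) = T x"
        using HsT[OF k(2) G1[OF x]] HsT[OF k(1) x] by (simp add: emul_assoc)
      show "beta (emul x (emul k1 k2)) = beta x"
        using HsB[OF k(2) G1[OF x]] HsB[OF k(1) x] by (simp add: emul_assoc)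
    qed
  next
    fix k assume k: "k \<in> Hs"
    have kG: "k \<in> G" using HsG k by blast
    show "einv k \<in> Hs"
    proof (rule HsI)
      show "einv k \<in> G" using kG sg by (simp add: sg_inv)
    next
      fix x assume x: "x \<in> G"
      have xk: "emul x (einv k) \<in> G" using x kG sg by (simp add: sg_mul sg_inv)
      have e: "emul (emul x (einv k)) k = x"
        using einv_left[OF sg_Eucl[OF sg kG]] by (simp add: emul_assoc)
      show "T (emul x (einv k)) = T x" using HsT[OF k xk] e by simp
      show "beta (emul x (einv k)) = beta x" using HsB[OF k xk] e by simp
    qed
  qed
  have R1Hs: "R1 \<subseteq> Hs" using R1G TK betaK HsI by blast
  have GHs: "G \<subseteq> Hs" using sgHs R1Hs gen unfolding egen_def by blast
  have TG: "T g = T eid" "beta g = beta eid" if "g \<in> G" for g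
    using HsT[of g eid] HsB[of g eid] GHs that sg_eid[OF sg] by auto
  obtain B where B: "finite B" "span B = UNIV" "B \<subseteq> Lat G" using sg_basis[OF sgr] by blast
  have Tb: "T eid *v b = 0" if b: "b \<in> B" for b
  proof -
    define t where "t = (mat 1 :: real^'d^'d, of_nat N *\<^sub>R b)"
    have tH: "t \<in> H" unfolding t_def H_def using transl_pow_mem b B(3) by blast
    have tG: "t \<in> G" using tH HG by blast
    have "u (emul eid t) = u eid" using per tH sg_eid[OF sg] unfolding periodic_def H_def by blast
    then have "aa t = aa eid" using u_aa tG sg_eid[OF sg] by simp
    moreover have "beta t = beta eid" using TG(2)[OF tG] .
    moreover have "T t = T eid" using TG(1)[OF tG] .
    ultimately have "T eid *v act t x0 = T eid *v x0"
      unfolding beta_def by (simp add: t_def rot_def eid_def act_def)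
    then have "T eid *v (of_nat N *\<^sub>R b) = 0"
      by (simp add: t_def act_def matrix_vector_right_distrib)
    then show ?thesis using N1 by (simp add: matrix_vector_mult_scaleR)
  qed
  have T0: "T eid = 0" by (rule span_eq_mat[OF B(2)]) (simp add: Tb)
  have "rot g *v u g = beta eid" if g: "g \<in> G" for g
    using TG[OF g] T0 u_aa[OF g] unfolding beta_def by simp
  then show ?thesis unfolding Utrans_def by blast
qed



lemma transpose_zero': "transpose (0::real^'n^'m) = 0"
  by (simp add: transpose_def vec_eq_iff)

lemma easy:
  fixes G :: "'d::finite eucl set" and x0 :: "real^'d"
  assumes sg: "esubgroup G" and u: "u \<in> Utrans G" and CG: "C \<subseteq> G" and RG: "R \<subseteq> G"
  shows "Rnorm x0 C R u = 0"
proof -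
  obtain a0 where a0: "\<forall>g\<in>G. rot g *v u g = a0" using u unfolding Utrans_def by blast
  have orthG: "orthogonal_matrix (rot g)" if "g \<in> G" for g
    using sg_Eucl[OF sg that] by (cases g) (simp add: Eucl_def rot_def)
  have z: "isodist x0 R (\<lambda>h. u (emul g h)) = 0" if g: "g \<in> C" for g
  proof -
    have gG: "g \<in> G" using g CG by blast
    have "rot h *v u (emul g h) = transpose (rot g) *v a0" if h: "h \<in> R" for h
    proof -
      have "emul g h \<in> G" using gG h RG sg by (simp add: sg_mul subsetD)
      then have "rot (emul g h) *v u (emul g h) = a0" using a0 by blast
      then have "rot g *v (rot h *v u (emul g h)) = a0" by (simp add: rot_emul matrix_vector_mul_assoc)
      then show ?thesis using orthTAv[OF orthG[OF gG], of "rot h *v u (emul g h)"] by (simp del: transpose_matrix_vector)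
    qed
    then have "(\<lambda>h. u (emul g h)) \<in> Uiso x0 R"
      unfolding Uiso_def skew_def by (intro CollectI exI[of _ "transpose (rot g) *v a0"] exI[of _ 0]) (simp add: transpose_zero')
    then have mem: "0 \<in> {sqrt (\<Sum>h\<in>R. (norm ((\<lambda>h. u (emul g h)) h - v h))\<^sup>2) | v. v \<in> Uiso x0 R}"
      by force
    show ?thesis unfolding isodist_def
      by (rule cInf_eq_minimum[OF mem]) (auto intro!: sum_nonneg)
  qed
  show ?thesis unfolding Rnorm_def using z by simp
qed

lemma adm1:
  fixes G :: "'d::finite eucl set"
  assumes sg: "esubgroup G"
  shows "admissible G 1"
proof -
  have tp: "transl_pow G 1 = transl G" unfolding transl_pow_def by (simp add: eid_def emul_def)
  have orthG: "orthogonal_matrix (fst g)" if "g \<in> G" for g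
    using sg_Eucl[OF sg that] by (cases g) (simp add: Eucl_def)
  have "esubgroup (transl G)"
    unfolding esubgroup_def transl_def using sg Lat_0[OF sg] Lat_add[OF sg] Lat_neg[OF sg]
    by (auto simp: sg_mul sg_inv sg_eid sg_Eucl emul_def einv_def eid_def Lat_def)
  moreover have "emul (emul g h) (einv g) \<in> transl G" if "g \<in> G" "h \<in> transl G" for g h
  proof -
    have "emul (emul g h) (einv g) \<in> G" using that sg unfolding transl_def by (simp add: sg_mul sg_inv)
    moreover have "fst (emul (emul g h) (einv g)) = mat 1"
      using that orthG[OF that(1)] unfolding transl_def by (simp add: emul_def einv_def orthAT)
    ultimately show ?thesis unfolding transl_def by simp
  qed
  ultimately show ?thesis unfolding admissible_def enormal_def tp transl_def by auto
qed

lemma per_trans: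
  fixes G :: "'d::finite eucl set"
  assumes sg: "esubgroup G" and u: "u \<in> Utrans G"
  shows "periodic G N u"
  unfolding periodic_def
proof (intro ballI)
  fix g t assume g: "g \<in> G" and t: "t \<in> transl_pow G N"
  obtain b where b: "b \<in> Lat G" "t = (mat 1, of_nat N *\<^sub>R b)"
    using t unfolding transl_pow_def transl_def Lat_def by (auto simp: epow_transl)
  have tG: "t \<in> G" using Lat_nat[OF sg b(1)] b(2) by (simp add: Lat_def)
  obtain a0 where a0: "\<forall>g\<in>G. rot g *v u g = a0" using u unfolding Utrans_def by blast
  have "emul g t \<in> G" using g tG sg by (simp add: sg_mul)
  then have "rot (emul g t) *v u (emul g t) = a0" using a0 by blast
  moreover have "rot (emul g t) = rot g" using b(2) by (simp add: rot_def emul_def)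
  ultimately have "rot g *v u (emul g t) = rot g *v u g" using a0 g by simp
  moreover have "orthogonal_matrix (rot g)"
    using sg_Eucl[OF sg g] by (cases g) (simp add: Eucl_def rot_def)
  ultimately show "u (emul g t) = u g"
    by (metis orthTAv)
qed

theorem corollary3p29:
  fixes G :: "'d::finite eucl set" and x0 :: "real^'d" and R :: "'d eucl set"
    and C :: "nat \<Rightarrow> 'd eucl set"
  assumes "space_group G"
    and "inj_on (\<lambda>g. act g x0) G"
    and "\<And>N. admissible G N \<Longrightarrow> reps G (transl_pow G N) (C N)"
    and "R \<subseteq> G"
    and "property2 x0 G R"
  shows "\<forall>u. (u \<in> Utrans G \<longleftrightarrow>
               (\<exists>N. admissible G N \<and> periodic G N u \<and> Rnorm x0 (C N) R u = 0))
           \<and> (u \<in> Utrans G \<longleftrightarrow>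
               u \<in> Uper G \<and> (\<forall>N. admissible G N \<and> periodic G N u \<longrightarrow> Rnorm x0 (C N) R u = 0))"
proof -
  have sg: "esubgroup G" using assms(1) by (simp add: space_group_def)
  have CG: "C N \<subseteq> G" if "admissible G N" for N using assms(3)[OF that] by (simp add: reps_def)
  have f1: "\<exists>N. admissible G N \<and> periodic G N u \<and> Rnorm x0 (C N) R u = 0" if u: "u \<in> Utrans G" for u
    using adm1[OF sg] per_trans[OF sg u] easy[OF sg u CG[OF adm1[OF sg]] assms(4)] by blast
  have f2: "u \<in> Uper G \<and> (\<forall>N. admissible G N \<and> periodic G N u \<longrightarrow> Rnorm x0 (C N) R u = 0)"
    if u: "u \<in> Utrans G" for u
    unfolding Uper_def using adm1[OF sg] per_trans[OF sg u] easy[OF sg u CG assms(4)] by blast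
  have b1: "u \<in> Utrans G" if a: "\<exists>N. admissible G N \<and> periodic G N u \<and> Rnorm x0 (C N) R u = 0" for u
  proof -
    obtain N where N: "admissible G N" "periodic G N u" "Rnorm x0 (C N) R u = 0" using a by blast
    show "u \<in> Utrans G" using hard[OF assms(1) assms(3)[OF N(1)] N(1) assms(4,5) N(2,3)] .
  qed
  have b2: "u \<in> Utrans G" if a: "u \<in> Uper G \<and> (\<forall>N. admissible G N \<and> periodic G N u \<longrightarrow> Rnorm x0 (C N) R u = 0)" for u
  proof -
    obtain N where N: "admissible G N" "periodic G N u" using a unfolding Uper_def by blast
    then have "Rnorm x0 (C N) R u = 0" using a by blast
    then show "u \<in> Utrans G" using hard[OF assms(1) assms(3)[OF N(1)] N(1) assms(4,5) N(2)] by blast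
  qed
  show ?thesis using f1 f2 b1 b2 by blast
qed


end
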